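(* Let $\pi\in[0,1)$, $\epsilon\in\left(0,\tfrac12\right]$, $g>0$, $\underline{\gamma}\in[0,1]$, let $q:[0,1]\to\mathbb{R}$ be Lebesgue integrable, and let $r(x)=\min\{\int_\rho q(z)\,\mathrm{d}z:\rho\subseteq[0,1]\text{ Lebesgue measurable},\ \lambda(\rho)=x\}$ for $x\in[0,1]$ (so $r(0)=0$). Let $$\Gamma^\star=\left\{h\in[0,1]:\ \frac{(1-\pi)(1-\epsilon)-\pi\epsilon g}{(1-\pi)\epsilon}\,h\ \ge\ r(\underline{\gamma}h)\right\}.$$ Suppose the principal's policy $\gamma^\star:[0,1]\to\{0,\underline{\gamma}\}$ punishes at rate $\underline{\gamma}$ exactly in the states where this is credible, i.e. $\gamma^\star(h)=\underline{\gamma}$ if $h\in\Gamma^\star$ and $\gamma^\star(h)=0$ otherwise. Then $\gamma^\star$ is a threshold rule: there exists $\tilde h\in[0,1]$ such that $\gamma^\star(h)=\underline{\gamma}$ for all $h\in[0,\tilde h)$, $\gamma^\star(h)=0$ for all $h\in(\tilde h,1]$, and $\gamma^\star(\tilde h)\in\{0,\underline{\gamma}\}$, where $\gamma^\star(\tilde h)=\underline{\gamma}$ is possible only if $\tilde h$ satisfies the defining inequality of $\Gamma^\star$.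
   Context: In the principal–agent model of technology adoption, $h\in[0,1]$ is the measure of agents with access to a new technology (good with probability $\pi$, yielding $1+g$ if good and $0$ if bad when used), $\epsilon$ is the error probability of the agents' research signal, $\underline{\gamma}$ is the minimal rate of firing failed agents that induces research effort, $q(z)$ is the cost of replacement worker $z$, and $r(x)$ the least cost of replacing a measure $x$ of workers. $\Gamma^\star$ is the set of states in which the principal finds it worthwhile (under commitment) to punish failures at rate $\underline{\gamma}$; the principal only ever uses punishment rates $0$ or $\underline{\gamma}$. *)

theory Defs
  imports "HOL-Analysis.Analysis"
begin

text \<open>Rendered as the infimum (the paper asserts the minimum is attained).\<close>
definition repl_cost :: "(real \<Rightarrow> real) \<Rightarrow> real \<Rightarrow> real" where
  "repl_cost q x = Inf {(LINT z:\<rho>|lborel. q z) | \<rho>.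
      \<rho> \<in> sets lborel \<and> \<rho> \<subseteq> {0..1} \<and> measure lborel \<rho> = x}"

definition Gamma_star :: "real \<Rightarrow> real \<Rightarrow> real \<Rightarrow> real \<Rightarrow> (real \<Rightarrow> real) \<Rightarrow> real set" where
  "Gamma_star \<pi> \<epsilon> g \<gamma> q = {h \<in> {0..1}.
      ((1 - \<pi>) * (1 - \<epsilon>) - \<pi> * \<epsilon> * g) / ((1 - \<pi>) * \<epsilon>) * h \<ge> repl_cost q (\<gamma> * h)}"

end

theory Submission
  imports Defs
begin

lemma fin01: "A \<subseteq> {0..1::real} \<Longrightarrow> emeasure lborel A \<noteq> top"
proof -
  assume "A \<subseteq> {0..1::real}"
  then have "emeasure lborel A \<le> emeasure lborel {0..1::real}" by (rule emeasure_mono) simp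
  moreover have "emeasure lborel {0..1::real} \<noteq> top" by simp
  ultimately show ?thesis using neq_top_trans by blast
qed

lemma fin01': "A \<subseteq> {0..1::real} \<Longrightarrow> emeasure lborel A \<noteq> \<infinity>"
  using fin01 by (simp add: infinity_ennreal_def)

lemma mono01: "A \<subseteq> B \<Longrightarrow> A \<in> sets lborel \<Longrightarrow> B \<in> sets lborel \<Longrightarrow> B \<subseteq> {0..1::real}
  \<Longrightarrow> measure lborel A \<le> measure lborel B"
proof -
  assume a: "A \<subseteq> B" "A \<in> sets lborel" "B \<in> sets lborel" "B \<subseteq> {0..1::real}"
  have "emeasure lborel B < top" using fin01[OF a(4)] by (simp add: top.not_eq_extremum)
  then have "B \<in> fmeasurable lborel" using a(3) by (simp add: fmeasurable_def)
  then show ?thesis using a measure_mono_fmeasurable by blast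
qed

lemma null_int:
  fixes f :: "real \<Rightarrow> real"
  assumes "\<rho> \<in> sets lborel" "\<rho> \<subseteq> {0..1}" "measure lborel \<rho> = 0"
  shows "(LINT z:\<rho>|lborel. f z) = 0"
proof -
  have "emeasure lborel \<rho> = 0"
    using emeasure_eq_ennreal_measure[OF fin01[OF assms(2)]] assms(3) by simp
  then have "\<rho> \<in> null_sets lborel" using assms(1) by auto
  then have "AE x in lborel. x \<notin> \<rho>" by (rule AE_not_in)
  then have "AE x in lborel. indicator \<rho> x *\<^sub>R f x = 0" by eventually_elim auto
  then show ?thesis unfolding set_lebesgue_integral_def by (rule integral_eq_zero_AE)
qed

lemma level_subset:
  fixes f :: "real \<Rightarrow> real"
  assumes f: "integrable lborel f" and rho: "\<rho> \<in> sets lborel" "\<rho> \<subseteq> {0..1}"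
    and t: "0 < t" "t < 1" and mpos: "0 < measure lborel \<rho>"
  shows "\<exists>\<rho>'. \<rho>' \<in> sets lborel \<and> \<rho>' \<subseteq> \<rho> \<and> measure lborel \<rho>' = t * measure lborel \<rho>
     \<and> (LINT z:\<rho>'|lborel. f z) \<le> t * (LINT z:\<rho>|lborel. f z)"
proof -
  define m where "m = measure lborel \<rho>"
  have fm: "f \<in> borel_measurable lborel" using f by simp
  have si: "set_integrable lborel A f" if "A \<in> sets lborel" for A
    unfolding set_integrable_def using integrable_mult_indicator[OF that f] .
  define E where "E a = {z\<in>\<rho>. f z \<le> a}" for a
  define L where "L a = {z\<in>\<rho>. f z < a}" for a
  have Es: "E a \<in> sets lborel" for a
  proof -
    have "{z. f z \<le> a} \<in> sets lborel" using fm by measurable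
    then have "\<rho> \<inter> {z. f z \<le> a} \<in> sets lborel" using rho(1) by blast
    moreover have "E a = \<rho> \<inter> {z. f z \<le> a}" unfolding E_def by auto
    ultimately show ?thesis by simp
  qed
  have Ls: "L a \<in> sets lborel" for a
  proof -
    have "{z. f z < a} \<in> sets lborel" using fm by measurable
    then have "\<rho> \<inter> {z. f z < a} \<in> sets lborel" using rho(1) by blast
    moreover have "L a = \<rho> \<inter> {z. f z < a}" unfolding L_def by auto
    ultimately show ?thesis by simp
  qed
  have E01: "E a \<subseteq> {0..1}" for a using rho(2) unfolding E_def by auto
  have Emono: "measure lborel (E a) \<le> measure lborel (E b)" if "a \<le> b" for a b
    by (rule mono01) (use that Es E01 in \<open>auto simp: E_def\<close>)
  have Efin: "emeasure lborel (E a) \<noteq> top" for a using fin01[OF E01] .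
  obtain a1 where a1: "t * m < measure lborel (E a1)"
  proof -
    have un: "(\<Union>n. E (real n)) = \<rho>"
    proof
      show "(\<Union>n. E (real n)) \<subseteq> \<rho>" unfolding E_def by auto
      show "\<rho> \<subseteq> (\<Union>n. E (real n))"
      proof
        fix z assume "z \<in> \<rho>"
        obtain n where "f z \<le> real n" using real_arch_simple by blast
        then show "z \<in> (\<Union>n. E (real n))" using \<open>z \<in> \<rho>\<close> unfolding E_def by auto
      qed
    qed
    have "(\<lambda>n. measure lborel (E (real n))) \<longlonglongrightarrow> measure lborel (\<Union>n. E (real n))"
    proof (rule Lim_measure_incseq)
      show "range (\<lambda>n. E (real n)) \<subseteq> sets lborel" using Es by auto
      show "incseq (\<lambda>n. E (real n))" unfolding incseq_def E_def by auto
      show "emeasure lborel (\<Union>n. E (real n)) \<noteq> \<infinity>" using un fin01[OF rho(2)] by simp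
    qed
    then have "(\<lambda>n. measure lborel (E (real n))) \<longlonglongrightarrow> m" using un m_def by simp
    moreover have "t * m < m" using t mpos m_def by simp
    ultimately have "eventually (\<lambda>n. t * m < measure lborel (E (real n))) sequentially"
      by (rule order_tendstoD(1))
    then obtain n where "t * m < measure lborel (E (real n))" by (auto simp: eventually_sequentially)
    then show ?thesis using that by blast
  qed
  obtain a0 where a0: "measure lborel (E a0) < t * m"
  proof -
    have int: "(\<Inter>n. E (- real n)) = {}"
    proof (rule ccontr)
      assume "(\<Inter>n. E (- real n)) \<noteq> {}"
      then obtain z where z: "\<And>n. z \<in> E (- real n)" by blast
      obtain n where "- f z \<le> real n" using real_arch_simple by blast
      then have "f z \<ge> - real n" by simp
      moreover have "f z \<le> - real (Suc n)" using z[of "Suc n"] unfolding E_def by auto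
      ultimately show False by simp
    qed
    have "(\<lambda>n. measure lborel (E (- real n))) \<longlonglongrightarrow> measure lborel (\<Inter>n. E (- real n))"
    proof (rule Lim_measure_decseq)
      show "range (\<lambda>n. E (- real n)) \<subseteq> sets lborel" using Es by auto
      show "decseq (\<lambda>n. E (- real n))" unfolding decseq_def E_def by auto
      show "\<And>n. emeasure lborel (E (- real n)) \<noteq> \<infinity>" using Efin by simp
    qed
    then have "(\<lambda>n. measure lborel (E (- real n))) \<longlonglongrightarrow> 0" using int by simp
    moreover have "0 < t * m" using t mpos m_def by simp
    ultimately have "eventually (\<lambda>n. measure lborel (E (- real n)) < t * m) sequentially"
      by (rule order_tendstoD(2))
    then obtain n where "measure lborel (E (- real n)) < t * m" by (auto simp: eventually_sequentially)
    then show ?thesis using that by blast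
  qed
  define T where "T = {a. t * m \<le> measure lborel (E a)}"
  define as where "as = Inf T"
  have "a1 \<in> T" using a1 T_def by simp
  then have Tne: "T \<noteq> {}" by blast
  have Tlb: "a0 \<le> a" if "a \<in> T" for a
  proof (rule ccontr)
    assume "\<not> a0 \<le> a"
    then have "measure lborel (E a) \<le> measure lborel (E a0)" using Emono by simp
    then show False using that a0 T_def by auto
  qed
  have Tbdd: "bdd_below T" using Tlb by (auto simp: bdd_below_def)
  have E_as: "t * m \<le> measure lborel (E as)"
  proof -
    define A where "A n = E (as + inverse (real (Suc n)))" for n
    have int: "(\<Inter>n. A n) = E as"
    proof
      show "E as \<subseteq> (\<Inter>n. A n)" unfolding A_def E_def
        by (auto intro: order_trans[OF _ less_imp_le[OF add_strict_left_mono[OF positive_imp_inverse_positive]]])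
      show "(\<Inter>n. A n) \<subseteq> E as"
      proof
        fix z assume z: "z \<in> (\<Inter>n. A n)"
        have "f z \<le> as"
        proof (rule ccontr)
          assume "\<not> f z \<le> as"
          then obtain n where n: "inverse (real (Suc n)) < f z - as"
            using reals_Archimedean[of "f z - as"] by auto
          have "f z \<le> as + inverse (real (Suc n))" using z unfolding A_def E_def by auto
          then show False using n by simp
        qed
        then show "z \<in> E as" using z unfolding A_def E_def by auto
      qed
    qed
    have "(\<lambda>n. measure lborel (A n)) \<longlonglongrightarrow> measure lborel (\<Inter>n. A n)"
    proof (rule Lim_measure_decseq)
      show "range A \<subseteq> sets lborel" using Es A_def by auto
      show "decseq A" unfolding decseq_def A_def E_def
        by (auto intro: order_trans simp: frac_le)
      show "\<And>n. emeasure lborel (A n) \<noteq> \<infinity>" using Efin A_def by simp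
    qed
    then have lim: "(\<lambda>n. measure lborel (A n)) \<longlonglongrightarrow> measure lborel (E as)" using int by simp
    have "t * m \<le> measure lborel (A n)" for n
    proof -
      have "Inf T < as + inverse (real (Suc n))" using as_def by simp
      then obtain a where a: "a \<in> T" "a < as + inverse (real (Suc n))"
        using cInf_less_iff[OF Tne Tbdd] by auto
      then have "measure lborel (E a) \<le> measure lborel (A n)" unfolding A_def by (intro Emono) simp
      then show ?thesis using a T_def by auto
    qed
    then show ?thesis by (intro LIMSEQ_le_const[OF lim]) auto
  qed
  have L_as: "measure lborel (L as) \<le> t * m"
  proof -
    define A where "A n = E (as - inverse (real (Suc n)))" for n
    have un: "(\<Union>n. A n) = L as"
    proof
      show "(\<Union>n. A n) \<subseteq> L as"
      proof
        fix z assume "z \<in> (\<Union>n. A n)"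
        then obtain n where "z \<in> \<rho>" "f z \<le> as - inverse (real (Suc n))" unfolding A_def E_def by auto
        moreover have "0 < inverse (real (Suc n))" by simp
        ultimately have "f z < as" by linarith
        then show "z \<in> L as" using \<open>z \<in> \<rho>\<close> unfolding L_def by auto
      qed
      show "L as \<subseteq> (\<Union>n. A n)"
      proof
        fix z assume z: "z \<in> L as"
        then obtain n where n: "inverse (real (Suc n)) < as - f z"
          using reals_Archimedean[of "as - f z"] unfolding L_def by auto
        then have "f z \<le> as - inverse (real (Suc n))" by linarith
        then have "z \<in> A n" using z unfolding A_def E_def L_def by auto
        then show "z \<in> (\<Union>n. A n)" by blast
      qed
    qed
    have "(\<lambda>n. measure lborel (A n)) \<longlonglongrightarrow> measure lborel (\<Union>n. A n)"
    proof (rule Lim_measure_incseq)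
      show "range A \<subseteq> sets lborel" using Es A_def by auto
      show "incseq A" unfolding incseq_def A_def E_def
        by (auto intro: order_trans simp: frac_le)
      show "emeasure lborel (\<Union>n. A n) \<noteq> \<infinity>" using fin01[of "\<Union>n. A n"] E01 A_def by auto
    qed
    then have lim: "(\<lambda>n. measure lborel (A n)) \<longlonglongrightarrow> measure lborel (L as)" using un by simp
    have "measure lborel (A n) \<le> t * m" for n
    proof (rule ccontr)
      assume "\<not> measure lborel (A n) \<le> t * m"
      then have "as - inverse (real (Suc n)) \<in> T" unfolding T_def A_def by simp
      then have "as \<le> as - inverse (real (Suc n))" unfolding as_def by (rule cInf_lower[OF _ Tbdd])
      then show False by simp
    qed
    then show ?thesis by (intro LIMSEQ_le_const2[OF lim]) auto
  qed
  define D where "D = {z\<in>\<rho>. f z = as}"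
  have Ds: "D \<in> sets lborel"
  proof -
    have "{z. f z = as} \<in> sets lborel" using fm by measurable
    then have "\<rho> \<inter> {z. f z = as} \<in> sets lborel" using rho(1) by blast
    moreover have "D = \<rho> \<inter> {z. f z = as}" unfolding D_def by auto
    ultimately show ?thesis by simp
  qed
  have D01: "D \<subseteq> {0..1}" using rho(2) D_def by auto
  have L01: "L a \<subseteq> {0..1}" for a using rho(2) L_def by auto
  have ELD: "E as = L as \<union> D" "L as \<inter> D = {}" unfolding E_def L_def D_def by auto
  have mE: "measure lborel (E as) = measure lborel (L as) + measure lborel D"
    unfolding ELD(1) by (rule measure_Union[OF fin01'[OF L01] fin01'[OF D01] Ls Ds ELD(2)])
  define d where "d = t * m - measure lborel (L as)"
  have d: "0 \<le> d" "d \<le> measure lborel D" using L_as E_as mE d_def by auto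
  define \<phi> where "\<phi> s = measure lborel (D \<inter> {..s})" for s :: real
  have Dcs: "D \<inter> {..s} \<in> sets lborel" for s using Ds by auto
  have phi_step: "\<phi> s' \<le> \<phi> s + (s' - s) \<and> \<phi> s \<le> \<phi> s'" if "s \<le> s'" for s s'
  proof -
    have split: "D \<inter> {..s'} = (D \<inter> {..s}) \<union> (D \<inter> {s<..s'})" using that by auto
    have "\<phi> s' = \<phi> s + measure lborel (D \<inter> {s<..s'})"
      unfolding \<phi>_def split
      by (rule measure_Union) (use fin01'[of "D \<inter> {..s}"] fin01'[of "D \<inter> {s<..s'}"] D01 Ds in auto)
    moreover have "measure lborel (D \<inter> {s<..s'}) \<le> measure lborel {s<..s'}"
      by (rule measure_mono_fmeasurable) (use Ds that in \<open>auto simp: fmeasurable_def\<close>)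
    moreover have "measure lborel {s<..s'} = s' - s" using that by simp
    moreover have "0 \<le> measure lborel (D \<inter> {s<..s'})" by simp
    ultimately show ?thesis by linarith
  qed
  have lip: "1-lipschitz_on {-1..1} \<phi>"
  proof (rule lipschitz_onI)
    fix x y :: real
    show "dist (\<phi> x) (\<phi> y) \<le> 1 * dist x y"
    proof (cases "x \<le> y")
      case True then show ?thesis using phi_step[OF True] by (simp add: dist_real_def)
    next
      case False then have "y \<le> x" by simp
      then show ?thesis using phi_step[OF \<open>y \<le> x\<close>] by (simp add: dist_real_def)
    qed
  qed simp
  have phim1: "\<phi> (-1) = 0"
  proof -
    have "D \<inter> {..-1} = {}" using D01 by auto
    then show ?thesis unfolding \<phi>_def by simp
  qed
  have phi1: "\<phi> 1 = measure lborel D"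
  proof -
    have "D \<inter> {..1} = D" using D01 by auto
    then show ?thesis unfolding \<phi>_def by simp
  qed
  obtain s where s: "\<phi> s = d"
    using IVT'[of \<phi> "-1" d 1] d phim1 phi1 lipschitz_on_continuous_on[OF lip] by auto
  define \<rho>' where "\<rho>' = L as \<union> (D \<inter> {..s})"
  have r's: "\<rho>' \<in> sets lborel" using Ls Dcs \<rho>'_def by auto
  have r'sub: "\<rho>' \<subseteq> \<rho>" unfolding \<rho>'_def L_def D_def by auto
  have r'01: "\<rho>' \<subseteq> {0..1}" using r'sub rho(2) by auto
  have mr': "measure lborel \<rho>' = t * m"
  proof -
    have "measure lborel \<rho>' = measure lborel (L as) + \<phi> s"
      unfolding \<rho>'_def \<phi>_def
      by (rule measure_Union) (use fin01'[of "L as"] fin01'[of "D \<inter> {..s}"] D01 L01 Ls Dcs in \<open>auto simp: L_def D_def\<close>)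
    then show ?thesis using s d_def by simp
  qed
  define R where "R = \<rho> - \<rho>'"
  have Rs: "R \<in> sets lborel" using rho(1) r's R_def by auto
  have mR: "measure lborel R = m - t * m"
    unfolding R_def m_def using measure_Diff[OF fin01'[OF rho(2)] rho(1) r's r'sub] mr' m_def by simp
  have I'le: "(LINT z:\<rho>'|lborel. f z) \<le> as * (t * m)"
  proof -
    have "(LINT z:\<rho>'|lborel. f z) \<le> (LINT z:\<rho>'|lborel. as)"
    proof (rule set_integral_mono)
      show "set_integrable lborel \<rho>' f" using si r's .
      show "set_integrable lborel \<rho>' (\<lambda>_. as)"
        using r's fin01[OF r'01] by (simp add: set_integrable_def top.not_eq_extremum)
      show "\<And>x. x \<in> \<rho>' \<Longrightarrow> f x \<le> as" unfolding \<rho>'_def L_def D_def by auto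
    qed
    also have "\<dots> = measure lborel \<rho>' * as" using set_integral_const[OF r's fin01'[OF r'01], of as] by (metis real_scaleR_def)
    finally show ?thesis using mr' by (simp add: mult.commute)
  qed
  have IRge: "as * (m - t * m) \<le> (LINT z:R|lborel. f z)"
  proof -
    have R01: "R \<subseteq> {0..1}" using R_def rho(2) by auto
    have "measure lborel R * as = (LINT z:R|lborel. as)" using set_integral_const[OF Rs fin01'[OF R01], of as] by (metis real_scaleR_def)
    also have "(LINT z:R|lborel. as) \<le> (LINT z:R|lborel. f z)"
    proof (rule set_integral_mono)
      show "set_integrable lborel R f" using si Rs .
      show "set_integrable lborel R (\<lambda>_. as)"
        using Rs fin01[OF R01] by (simp add: set_integrable_def top.not_eq_extremum)
      show "\<And>x. x \<in> R \<Longrightarrow> as \<le> f x" unfolding R_def \<rho>'_def L_def D_def by auto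
    qed
    finally show ?thesis using mR by (simp add: mult.commute)
  qed
  have split: "(LINT z:\<rho>|lborel. f z) = (LINT z:\<rho>'|lborel. f z) + (LINT z:R|lborel. f z)"
  proof -
    have "\<rho> = \<rho>' \<union> R" "\<rho>' \<inter> R = {}" using r'sub R_def by auto
    then show ?thesis using set_integral_Un[OF _ si[OF r's] si[OF Rs]] by simp
  qed
  have fin: "(LINT z:\<rho>'|lborel. f z) \<le> t * (LINT z:\<rho>|lborel. f z)"
  proof -
    let ?I = "LINT z:\<rho>'|lborel. f z" and ?J = "LINT z:R|lborel. f z"
    have "(1 - t) * ?I \<le> (1 - t) * (as * (t * m))" using I'le t by (intro mult_left_mono) auto
    also have "\<dots> = t * (as * (m - t * m))" by (simp add: algebra_simps)
    also have "\<dots> \<le> t * ?J" using IRge t by (intro mult_left_mono) auto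
    finally have "(1 - t) * ?I \<le> t * ?J" .
    then show ?thesis unfolding split by (simp add: algebra_simps)
  qed
  show ?thesis using r's r'sub mr' fin m_def by blast
qed

lemma gen_subset:
  fixes f :: "real \<Rightarrow> real"
  assumes f: "integrable lborel f" and rho: "\<rho> \<in> sets lborel" "\<rho> \<subseteq> {0..1}"
    and t: "0 \<le> t" "t \<le> 1"
  shows "\<exists>\<rho>'. \<rho>' \<in> sets lborel \<and> \<rho>' \<subseteq> \<rho> \<and> measure lborel \<rho>' = t * measure lborel \<rho>
     \<and> (LINT z:\<rho>'|lborel. f z) \<le> t * (LINT z:\<rho>|lborel. f z)"
proof (cases "t = 0 \<or> t = 1 \<or> measure lborel \<rho> = 0")
  case True
  then consider "t = 0" | "t = 1" | "measure lborel \<rho> = 0" by blast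
  then show ?thesis
  proof cases
    case 1 then show ?thesis by (intro exI[of _ "{}"]) (auto simp: set_lebesgue_integral_def)
  next
    case 2 then show ?thesis using rho by (intro exI[of _ \<rho>]) auto
  next
    case 3 then show ?thesis using rho null_int[OF rho 3, of f] by (intro exI[of _ \<rho>]) auto
  qed
next
  case False
  then have "0 < t" "t < 1" "0 < measure lborel \<rho>" using t by (auto simp: less_le)
  then show ?thesis using level_subset[OF f rho] by blast
qed

definition Sset :: "(real \<Rightarrow> real) \<Rightarrow> real \<Rightarrow> real set" where
  "Sset q x = {(LINT z:\<rho>|lborel. q z) | \<rho>.
      \<rho> \<in> sets lborel \<and> \<rho> \<subseteq> {0..1} \<and> measure lborel \<rho> = x}"

lemma repl_Sset: "repl_cost q x = Inf (Sset q x)"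
  unfolding repl_cost_def Sset_def ..

lemma restrict_int:
  fixes q :: "real \<Rightarrow> real"
  assumes "\<rho> \<subseteq> {0..1}"
  shows "(LINT z:\<rho>|lborel. q z) = (LINT z:\<rho>|lborel. indicator {0..1} z * q z)"
  unfolding set_lebesgue_integral_def
  by (rule arg_cong[where f="integral\<^sup>L lborel"]) (use assms in \<open>auto simp: indicator_def fun_eq_iff\<close>)

lemma repl0: "repl_cost q 0 = 0"
proof -
  have "Sset q 0 = {0}"
  proof
    show "Sset q 0 \<subseteq> {0}" unfolding Sset_def using null_int by auto
    show "{0} \<subseteq> Sset q 0" unfolding Sset_def
      by (auto intro!: exI[of _ "{}"] simp: set_lebesgue_integral_def)
  qed
  then show ?thesis by (simp add: repl_Sset)
qed

lemma repl_scale: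
  fixes q :: "real \<Rightarrow> real"
  assumes q: "set_integrable lborel {0..1} q" and x: "0 \<le> x" "x \<le> 1" and t: "0 \<le> t" "t \<le> 1"
  shows "repl_cost q (t * x) \<le> t * repl_cost q x"
proof (cases "t = 0")
  case True then show ?thesis by (simp add: repl0)
next
  case False
  then have tpos: "0 < t" using t by simp
  define Q where "Q z = indicator {0..1} z * q z" for z :: real
  have Q: "integrable lborel Q" using q unfolding set_integrable_def Q_def by simp
  have bdd: "bdd_below (Sset q y)" for y
  proof -
    have "- (LINT z|lborel. \<bar>Q z\<bar>) \<le> v" if vS: "v \<in> Sset q y" for v
    proof -
      obtain \<rho> where r: "\<rho> \<in> sets lborel" "\<rho> \<subseteq> {0..1}" "v = (LINT z:\<rho>|lborel. q z)"
        using vS unfolding Sset_def by auto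
      have "v = (LINT z|lborel. indicator \<rho> z * Q z)"
        using r restrict_int[OF r(2), of q] unfolding Q_def set_lebesgue_integral_def by simp
      moreover have "(LINT z|lborel. - \<bar>Q z\<bar>) \<le> (LINT z|lborel. indicator \<rho> z * Q z)"
      proof (rule integral_mono)
        show "integrable lborel (\<lambda>z. - \<bar>Q z\<bar>)" using Q by simp
        show "integrable lborel (\<lambda>z. indicator \<rho> z * Q z)"
          using integrable_mult_indicator[OF r(1) Q] by simp
        show "\<And>z. - \<bar>Q z\<bar> \<le> indicator \<rho> z * Q z" by (auto simp: indicator_def)
      qed
      ultimately show ?thesis by simp
    qed
    then show ?thesis unfolding bdd_below_def by blast
  qed
  have ne: "Sset q x \<noteq> {}"
  proof -
    have "(LINT z:{0..x}|lborel. q z) \<in> Sset q x" unfolding Sset_def using x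
      by (auto intro!: exI[of _ "{0..x}"])
    then show ?thesis by blast
  qed
  have "repl_cost q (t * x) / t \<le> Inf (Sset q x)"
  proof (rule cInf_greatest[OF ne])
    fix v assume "v \<in> Sset q x"
    then obtain \<rho> where r: "\<rho> \<in> sets lborel" "\<rho> \<subseteq> {0..1}" "measure lborel \<rho> = x"
      "v = (LINT z:\<rho>|lborel. q z)" unfolding Sset_def by auto
    obtain \<rho>' where r': "\<rho>' \<in> sets lborel" "\<rho>' \<subseteq> \<rho>" "measure lborel \<rho>' = t * measure lborel \<rho>"
      "(LINT z:\<rho>'|lborel. Q z) \<le> t * (LINT z:\<rho>|lborel. Q z)"
      using gen_subset[OF Q r(1) r(2) t] by blast
    have v': "(LINT z:\<rho>'|lborel. q z) \<le> t * v"
      using r' r restrict_int[OF r(2), of q] restrict_int[of \<rho>' q] unfolding Q_def by auto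
    have "(LINT z:\<rho>'|lborel. q z) \<in> Sset q (t * x)" unfolding Sset_def
      using r' r by auto
    then have "repl_cost q (t * x) \<le> (LINT z:\<rho>'|lborel. q z)"
      unfolding repl_Sset by (rule cInf_lower[OF _ bdd])
    then have "repl_cost q (t * x) \<le> t * v" using v' by simp
    then show "repl_cost q (t * x) / t \<le> v" using tpos by (simp add: divide_le_eq mult.commute)
  qed
  then show ?thesis using tpos by (simp add: repl_Sset divide_le_eq mult.commute)
qed

theorem proposition1:
  fixes \<pi> \<epsilon> g \<gamma> :: real and q :: "real \<Rightarrow> real" and \<gamma>s :: "real \<Rightarrow> real"
  assumes "0 \<le> \<pi>" "\<pi> < 1"
    and "0 < \<epsilon>" "\<epsilon> \<le> 1/2"
    and "0 < g"
    and "0 \<le> \<gamma>" "\<gamma> \<le> 1"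
    and "set_integrable lborel {0..1} q"
    and "\<forall>h\<in>{0..1}. \<gamma>s h = (if h \<in> Gamma_star \<pi> \<epsilon> g \<gamma> q then \<gamma> else 0)"
  shows "\<exists>ht\<in>{0..1}.
           (\<forall>h\<in>{0..<ht}. \<gamma>s h = \<gamma>) \<and>
           (\<forall>h\<in>{ht<..1}. \<gamma>s h = 0) \<and>
           \<gamma>s ht \<in> {0, \<gamma>} \<and>
           (\<gamma>s ht = \<gamma> \<longrightarrow>
              ((1 - \<pi>) * (1 - \<epsilon>) - \<pi> * \<epsilon> * g) / ((1 - \<pi>) * \<epsilon>) * ht
                \<ge> repl_cost q (\<gamma> * ht))"
proof -
  define c where "c = ((1 - \<pi>) * (1 - \<epsilon>) - \<pi> * \<epsilon> * g) / ((1 - \<pi>) * \<epsilon>)"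
  define G where "G = Gamma_star \<pi> \<epsilon> g \<gamma> q"
  have Gdef: "h \<in> G \<longleftrightarrow> h \<in> {0..1} \<and> repl_cost q (\<gamma> * h) \<le> c * h" for h
    unfolding G_def Gamma_star_def c_def by auto
  have gs: "\<gamma>s h = (if h \<in> G then \<gamma> else 0)" if "h \<in> {0..1}" for h
    using assms(9) that G_def by auto
  show ?thesis
  proof (cases "\<gamma> = 0")
    case True
    show ?thesis using gs True by (intro bexI[of _ 0]) (auto simp: repl0)
  next
    case False
    have down: "h' \<in> G" if h: "h \<in> G" "0 \<le> h'" "h' \<le> h" for h h'
    proof (cases "h = 0")
      case True then show ?thesis using h by simp
    next
      case False
      have h01: "0 \<le> h" "h \<le> 1" using h(1) Gdef by auto
      then have hpos: "0 < h" using False by simp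
      define t where "t = h' / h"
      have t: "0 \<le> t" "t \<le> 1" using h hpos t_def by auto
      have eq: "\<gamma> * h' = t * (\<gamma> * h)" using hpos t_def by simp
      have "repl_cost q (\<gamma> * h') \<le> t * repl_cost q (\<gamma> * h)"
        unfolding eq by (rule repl_scale[OF assms(8) _ _ t]) (use assms(6,7) h01 in \<open>auto intro: mult_le_one\<close>)
      also have "\<dots> \<le> t * (c * h)" using h(1) Gdef t by (intro mult_left_mono) auto
      also have "\<dots> = c * h'" using hpos t_def by simp
      finally show ?thesis using Gdef h h01 by auto
    qed
    have G0: "0 \<in> G" using Gdef repl0 by simp
    have Gb: "bdd_above G" using Gdef by (auto simp: bdd_above_def)
    define ht where "ht = Sup G"
    have ht01: "ht \<in> {0..1}"
    proof -
      have "0 \<le> ht" unfolding ht_def using cSup_upper[OF G0 Gb] .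
      moreover have "ht \<le> 1" unfolding ht_def
      proof (rule cSup_least)
        show "G \<noteq> {}" using G0 by blast
        show "\<And>x. x \<in> G \<Longrightarrow> x \<le> 1" using Gdef by auto
      qed
      ultimately show ?thesis by simp
    qed
    show ?thesis
    proof (rule bexI[OF _ ht01], intro conjI)
      show "\<forall>h\<in>{0..<ht}. \<gamma>s h = \<gamma>"
      proof
        fix h assume h: "h \<in> {0..<ht}"
        then obtain h'' where "h'' \<in> G" "h < h''" using less_cSup_iff[OF _ Gb] G0 ht_def by auto
        then have "h \<in> G" using down h by auto
        then show "\<gamma>s h = \<gamma>" using gs Gdef by auto
      qed
      show "\<forall>h\<in>{ht<..1}. \<gamma>s h = 0"
      proof
        fix h assume h: "h \<in> {ht<..1}"
        have "h \<notin> G"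
        proof
          assume "h \<in> G"
          then have "h \<le> ht" unfolding ht_def by (rule cSup_upper[OF _ Gb])
          then show False using h by simp
        qed
        then show "\<gamma>s h = 0" using gs h ht01 by auto
      qed
      show "\<gamma>s ht \<in> {0, \<gamma>}" using gs ht01 by auto
      show "\<gamma>s ht = \<gamma> \<longrightarrow> ((1 - \<pi>) * (1 - \<epsilon>) - \<pi> * \<epsilon> * g) / ((1 - \<pi>) * \<epsilon>) * ht
                \<ge> repl_cost q (\<gamma> * ht)"
      proof
        assume "\<gamma>s ht = \<gamma>"
        then have "ht \<in> G" using gs ht01 False by (auto split: if_splits)
        then show "((1 - \<pi>) * (1 - \<epsilon>) - \<pi> * \<epsilon> * g) / ((1 - \<pi>) * \<epsilon>) * ht
                \<ge> repl_cost q (\<gamma> * ht)" using Gdef c_def by simp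
      qed
    qed
  qed
qed

end
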